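(* Let $(A,\cdot)$ be a commutative associative algebra, $\circ:A\otimes A\to A$ a bilinear operation, and define $x\star y=x\circ y-2y\circ x$. Then the identities $$2(x\circ y)\cdot z-2(y\circ x)\cdot z=y\cdot(x\circ z)-x\cdot(y\circ z),\qquad 2x\circ(y\cdot z)=(z\cdot x)\circ y+z\cdot(x\circ y)\quad(\forall x,y,z\in A)$$ hold if and only if the identities $$(x\cdot y)\star z=x\cdot(y\star z),\qquad (x\star y)\cdot z-(y\star x)\cdot z=x\star(y\cdot z)-y\star(x\cdot z)\quad(\forall x,y,z\in A)$$ hold. In particular, $(A,\cdot,\circ)$ is an admissible Novikov-Poisson algebra if and only if $(A,\cdot,\star)$ is a Novikov-Poisson algebra.
   Context: All vector spaces are finite-dimensional over a field $\mathbb F$ of characteristic $0$. For a bilinear operation $\circ$ write $[x,y]=x\circ y-y\circ x$. An anti-pre-Lie algebra is $(A,\circ)$ with $x\circ(y\circ z)-y\circ(x\circ z)=[y,x]\circ z$ and $[x,y]\circ z+[y,z]\circ x+[z,x]\circ y=0$; an admissible Novikov algebra is $(A,\circ)$ with $x\circ(y\circ z)-y\circ(x\circ z)=[y,x]\circ z$ and $2x\circ[y,z]=(x\circ y)\circ z-(x\circ z)\circ y$ (it is automatically anti-pre-Lie). An anti-pre-Lie Poisson algebra is $(A,\cdot,\circ)$ with $(A,\cdot)$ commutative associative, $(A,\circ)$ anti-pre-Lie, satisfying the first pair of identities in the claim; it is an admissible Novikov-Poisson algebra if moreover $(A,\circ)$ is admissible Novikov. A Novikov algebra is $(A,\star)$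 with $(x\star y)\star z-x\star(y\star z)=(y\star x)\star z-y\star(x\star z)$ and $(x\star y)\star z=(x\star z)\star y$. A Novikov-Poisson algebra is $(A,\cdot,\star)$ with $(A,\cdot)$ commutative associative, $(A,\star)$ Novikov, satisfying the second pair of identities in the claim. *)

theory Defs
  imports Complex_Main
begin

definition bilinear_op :: "('k::field \<Rightarrow> 'a::ab_group_add \<Rightarrow> 'a) \<Rightarrow> ('a \<Rightarrow> 'a \<Rightarrow> 'a) \<Rightarrow> bool" where
  "bilinear_op scale f \<longleftrightarrow>
     (\<forall>x y z. f (x + y) z = f x z + f y z) \<and>
     (\<forall>x y z. f x (y + z) = f x y + f x z) \<and>
     (\<forall>c x y. f (scale c x) y = scale c (f x y)) \<and>
     (\<forall>c x y. f x (scale c y) = scale c (f x y))"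

definition finite_dim_space :: "('k::field \<Rightarrow> 'a::ab_group_add \<Rightarrow> 'a) \<Rightarrow> bool" where
  "finite_dim_space scale \<longleftrightarrow> (\<exists>B. finite_dimensional_vector_space scale B)"

definition comm_assoc_op :: "('a \<Rightarrow> 'a \<Rightarrow> 'a) \<Rightarrow> bool" where
  "comm_assoc_op m \<longleftrightarrow> (\<forall>x y. m x y = m y x) \<and> (\<forall>x y z. m (m x y) z = m x (m y z))"

definition commut :: "('a::ab_group_add \<Rightarrow> 'a \<Rightarrow> 'a) \<Rightarrow> 'a \<Rightarrow> 'a \<Rightarrow> 'a" where
  "commut c x y = c x y - c y x"

definition anti_pre_Lie :: "('a::ab_group_add \<Rightarrow> 'a \<Rightarrow> 'a) \<Rightarrow> bool" where
  "anti_pre_Lie c \<longleftrightarrow>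
     (\<forall>x y z. c x (c y z) - c y (c x z) = c (commut c y x) z) \<and>
     (\<forall>x y z. c (commut c x y) z + c (commut c y z) x + c (commut c z x) y = 0)"

definition admissible_Novikov :: "('k::field \<Rightarrow> 'a::ab_group_add \<Rightarrow> 'a) \<Rightarrow> ('a \<Rightarrow> 'a \<Rightarrow> 'a) \<Rightarrow> bool" where
  "admissible_Novikov scale c \<longleftrightarrow>
     (\<forall>x y z. c x (c y z) - c y (c x z) = c (commut c y x) z) \<and>
     (\<forall>x y z. scale 2 (c x (commut c y z)) = c (c x y) z - c (c x z) y)"

definition APLP_identities :: "('k::field \<Rightarrow> 'a::ab_group_add \<Rightarrow> 'a) \<Rightarrow> ('a \<Rightarrow> 'a \<Rightarrow> 'a) \<Rightarrow> ('a \<Rightarrow> 'a \<Rightarrow> 'a) \<Rightarrow> bool" where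
  "APLP_identities scale m c \<longleftrightarrow>
     (\<forall>x y z. scale 2 (m (c x y) z) - scale 2 (m (c y x) z) = m y (c x z) - m x (c y z)) \<and>
     (\<forall>x y z. scale 2 (c x (m y z)) = c (m z x) y + m z (c x y))"

definition NP_identities :: "('a::ab_group_add \<Rightarrow> 'a \<Rightarrow> 'a) \<Rightarrow> ('a \<Rightarrow> 'a \<Rightarrow> 'a) \<Rightarrow> bool" where
  "NP_identities m s \<longleftrightarrow>
     (\<forall>x y z. s (m x y) z = m x (s y z)) \<and>
     (\<forall>x y z. m (s x y) z - m (s y x) z = s x (m y z) - s y (m x z))"

definition anti_pre_Lie_Poisson :: "('k::field \<Rightarrow> 'a::ab_group_add \<Rightarrow> 'a) \<Rightarrow> ('a \<Rightarrow> 'a \<Rightarrow> 'a) \<Rightarrow> ('a \<Rightarrow> 'a \<Rightarrow> 'a) \<Rightarrow> bool" where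
  "anti_pre_Lie_Poisson scale m c \<longleftrightarrow>
     comm_assoc_op m \<and> anti_pre_Lie c \<and> APLP_identities scale m c"

definition admissible_Novikov_Poisson :: "('k::field \<Rightarrow> 'a::ab_group_add \<Rightarrow> 'a) \<Rightarrow> ('a \<Rightarrow> 'a \<Rightarrow> 'a) \<Rightarrow> ('a \<Rightarrow> 'a \<Rightarrow> 'a) \<Rightarrow> bool" where
  "admissible_Novikov_Poisson scale m c \<longleftrightarrow>
     anti_pre_Lie_Poisson scale m c \<and> admissible_Novikov scale c"

definition Novikov :: "('a::ab_group_add \<Rightarrow> 'a \<Rightarrow> 'a) \<Rightarrow> bool" where
  "Novikov s \<longleftrightarrow>
     (\<forall>x y z. s (s x y) z - s x (s y z) = s (s y x) z - s y (s x z)) \<and>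
     (\<forall>x y z. s (s x y) z = s (s x z) y)"

definition Novikov_Poisson :: "('a::ab_group_add \<Rightarrow> 'a \<Rightarrow> 'a) \<Rightarrow> ('a \<Rightarrow> 'a \<Rightarrow> 'a) \<Rightarrow> bool" where
  "Novikov_Poisson m s \<longleftrightarrow> comm_assoc_op m \<and> Novikov s \<and> NP_identities m s"

end

theory Submission
  imports Defs
begin

fun rep :: "nat \<Rightarrow> 'a::ab_group_add \<Rightarrow> 'a" where
  "rep 0 v = 0"
| "rep (Suc n) v = rep n v + v"

lemma rep_zero_arg: "rep n (0::'a::ab_group_add) = 0"
  by (induction n) auto

lemma rep_scale:
  assumes "vector_space scale"
  shows "rep n v = scale (of_nat n) v"
proof (induction n)
  case 0
  then show ?case using module.scale_zero_left[OF assms[unfolded module_iff_vector_space[symmetric]]] by simp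
next
  case (Suc n)
  then show ?case
    using module.scale_left_distrib[OF assms[unfolded module_iff_vector_space[symmetric]], of "of_nat n" 1 v]
      module.scale_one[OF assms[unfolded module_iff_vector_space[symmetric]]] by (simp add: add.commute)
qed

lemma rep_cancel_gen:
  fixes scale :: "'k::field_char_0 \<Rightarrow> 'a::ab_group_add \<Rightarrow> 'a"
    and v :: 'a
  assumes "vector_space scale" "rep n v = 0" "n > 0"
  shows "v = 0"
proof -
  have "scale (of_nat n) v = 0" using assms rep_scale by metis
  then have "scale (inverse (of_nat n)) (scale (of_nat n) v) = 0"
    using module.scale_zero_right[OF assms(1)[unfolded module_iff_vector_space[symmetric]]] by simp
  then show ?thesis using module.scale_scale[OF assms(1)[unfolded module_iff_vector_space[symmetric]]] module.scale_one[OF assms(1)[unfolded module_iff_vector_space[symmetric]]]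
    assms(3) by simp
qed

lemma bil_rules:
  assumes "bilinear_op scale f"
  shows "f (x + y) z = f x z + f y z" "f x (y + z) = f x y + f x z"
    "f (x - y) z = f x z - f y z" "f x (y - z) = f x y - f x z"
    "f (- x) z = - f x z" "f x (- z) = - f x z"
proof -
  have a1: "\<And>x y z. f (x + y) z = f x z + f y z" and a2: "\<And>x y z. f x (y + z) = f x y + f x z"
    using assms unfolding bilinear_op_def by auto
  show "f (x + y) z = f x z + f y z" "f x (y + z) = f x y + f x z" using a1 a2 by auto
  have l0: "f 0 z = 0" for z using a1[of 0 0 z] by simp
  have r0: "f x 0 = 0" for x using a2[of x 0 0] by simp
  have ln: "f (- x) z = - f x z" for x z using a1[of x "-x" z] l0 by (simp add: eq_neg_iff_add_eq_0 add.commute)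
  have rn: "f x (- z) = - f x z" for x z using a2[of x z "-z"] r0 by (simp add: eq_neg_iff_add_eq_0 add.commute)
  show "f (- x) z = - f x z" "f x (- z) = - f x z" using ln rn by auto
  show "f (x - y) z = f x z - f y z" using a1[of x "-y" z] ln by simp
  show "f x (y - z) = f x y - f x z" using a2[of x y "-z"] rn by simp
qed

theorem proposition3p39:
  fixes scale :: "'k::field_char_0 \<Rightarrow> 'a::ab_group_add \<Rightarrow> 'a"
    and mult circ star :: "'a \<Rightarrow> 'a \<Rightarrow> 'a"
  assumes "vector_space scale"
    and "finite_dim_space scale"
    and "bilinear_op scale mult"
    and "comm_assoc_op mult"
    and "bilinear_op scale circ"
    and "\<And>x y. star x y = circ x y - scale 2 (circ y x)"
  shows "(APLP_identities scale mult circ \<longleftrightarrow> NP_identities mult star)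
         \<and> (admissible_Novikov_Poisson scale mult circ \<longleftrightarrow> Novikov_Poisson mult star)"
proof -
  have s2: "scale 2 w = w + w" for w
    using module.scale_left_distrib[OF assms(1)[unfolded module_iff_vector_space[symmetric]], of 1 1 w] module.scale_one[OF assms(1)[unfolded module_iff_vector_space[symmetric]]]
    by (simp add: one_add_one)
  have mc: "mult x y = mult y x" for x y using assms(4) unfolding comm_assoc_op_def by auto
  have rep_cancel: "rep k v = 0 \<Longrightarrow> k > 0 \<Longrightarrow> v = 0" for k and v :: 'a
    using rep_cancel_gen[OF assms(1)] by blast
  note EXP = assms(6) s2 bil_rules[OF assms(3)] bil_rules[OF assms(5)] commut_def mc algebra_simps One_nat_def
  have P1: "APLP_identities scale mult circ \<Longrightarrow> NP_identities mult star"
  proof -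
    assume h: "APLP_identities scale mult circ"
    have hA1: "\<forall>x y z. scale 2 (mult (circ x y) z) - scale 2 (mult (circ y x) z) = mult y (circ x z) - mult x (circ y z)" using h unfolding APLP_identities_def by blast
    have hA2: "\<forall>x y z. scale 2 (circ x (mult y z)) = circ (mult z x) y + mult z (circ x y)" using h unfolding APLP_identities_def by blast
  have N1: "\<forall>x y z. star (mult x y) z = mult x (star y z)"
  proof (intro allI)
    fix x y z
    have e0: "(scale 2 (mult (circ y z) x) - scale 2 (mult (circ z y) x)) - (mult z (circ y x) - mult y (circ z x)) = 0" by (simp only: hA1[rule_format, of y z x] diff_self)
    have e1: "(scale 2 (circ y (mult x z))) - (circ (mult z y) x + mult z (circ y x)) = 0" by (simp only: hA2[rule_format, of y x z] diff_self)
    have e2: "(scale 2 (circ y (mult z x))) - (circ (mult x y) z + mult x (circ y z)) = 0" by (simp only: hA2[rule_format, of y z x] diff_self)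
    have e3: "(scale 2 (circ z (mult x y))) - (circ (mult y z) x + mult y (circ z x)) = 0" by (simp only: hA2[rule_format, of z x y] diff_self)
    have "rep 1 ((star (mult x y) z) - (mult x (star y z))) = 0 - rep 1 ((scale 2 (mult (circ y z) x) - scale 2 (mult (circ z y) x)) - (mult z (circ y x) - mult y (circ z x))) + rep 1 ((scale 2 (circ y (mult x z))) - (circ (mult z y) x + mult z (circ y x))) - rep 1 ((scale 2 (circ y (mult z x))) - (circ (mult x y) z + mult x (circ y z))) - rep 1 ((scale 2 (circ z (mult x y))) - (circ (mult y z) x + mult y (circ z x)))" by (simp add: EXP numeral_eq_Suc)
    also have "... = 0" by (simp only: e0 e1 e2 e3 rep_zero_arg add_0_left add_0_right diff_zero diff_0 minus_zero)
    finally have r: "rep 1 ((star (mult x y) z) - (mult x (star y z))) = 0" .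
    have "(star (mult x y) z) - (mult x (star y z)) = 0" using rep_cancel[OF r] by simp
    then show "star (mult x y) z = mult x (star y z)" by simp
  qed
  have N2: "\<forall>x y z. mult (star x y) z - mult (star y x) z = star x (mult y z) - star y (mult x z)"
  proof (intro allI)
    fix x y z
    have e0: "(scale 2 (mult (circ x y) z) - scale 2 (mult (circ y x) z)) - (mult y (circ x z) - mult x (circ y z)) = 0" by (simp only: hA1[rule_format, of x y z] diff_self)
    have e1: "(scale 2 (circ x (mult y z))) - (circ (mult z x) y + mult z (circ x y)) = 0" by (simp only: hA2[rule_format, of x y z] diff_self)
    have e2: "(scale 2 (circ x (mult z y))) - (circ (mult y x) z + mult y (circ x z)) = 0" by (simp only: hA2[rule_format, of x z y] diff_self)
    have e3: "(scale 2 (circ y (mult x z))) - (circ (mult z y) x + mult z (circ y x)) = 0" by (simp only: hA2[rule_format, of y x z] diff_self)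
    have e4: "(scale 2 (circ y (mult z x))) - (circ (mult x y) z + mult x (circ y z)) = 0" by (simp only: hA2[rule_format, of y z x] diff_self)
    have "rep 2 ((mult (star x y) z - mult (star y x) z) - (star x (mult y z) - star y (mult x z))) = rep 5 ((scale 2 (mult (circ x y) z) - scale 2 (mult (circ y x) z)) - (mult y (circ x z) - mult x (circ y z))) + rep 4 ((scale 2 (circ x (mult y z))) - (circ (mult z x) y + mult z (circ x y))) - rep 5 ((scale 2 (circ x (mult z y))) - (circ (mult y x) z + mult y (circ x z))) - rep 4 ((scale 2 (circ y (mult x z))) - (circ (mult z y) x + mult z (circ y x))) + rep 5 ((scale 2 (circ y (mult z x))) - (circ (mult x y) z + mult x (circ y z)))" by (simp add: EXP numeral_eq_Suc)
    also have "... = 0" by (simp only: e0 e1 e2 e3 e4 rep_zero_arg add_0_left add_0_right diff_zero diff_0 minus_zero)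
    finally have r: "rep 2 ((mult (star x y) z - mult (star y x) z) - (star x (mult y z) - star y (mult x z))) = 0" .
    have "(mult (star x y) z - mult (star y x) z) - (star x (mult y z) - star y (mult x z)) = 0" using rep_cancel[OF r] by simp
    then show "mult (star x y) z - mult (star y x) z = star x (mult y z) - star y (mult x z)" by simp
  qed
    show ?thesis unfolding NP_identities_def using N1 N2 by blast
  qed
  have P2: "NP_identities mult star \<Longrightarrow> APLP_identities scale mult circ"
  proof -
    assume h: "NP_identities mult star"
    have hN1: "\<forall>x y z. star (mult x y) z = mult x (star y z)" using h unfolding NP_identities_def by blast
    have hN2: "\<forall>x y z. mult (star x y) z - mult (star y x) z = star x (mult y z) - star y (mult x z)" using h unfolding NP_identities_def by blast
  have A1: "\<forall>x y z. scale 2 (mult (circ x y) z) - scale 2 (mult (circ y x) z) = mult y (circ x z) - mult x (circ y z)"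
  proof (intro allI)
    fix x y z
    have e0: "(star (mult x y) z) - (mult x (star y z)) = 0" by (simp only: hN1[rule_format, of x y z] diff_self)
    have e1: "(star (mult x z) y) - (mult x (star z y)) = 0" by (simp only: hN1[rule_format, of x z y] diff_self)
    have e2: "(star (mult y x) z) - (mult y (star x z)) = 0" by (simp only: hN1[rule_format, of y x z] diff_self)
    have e3: "(star (mult y z) x) - (mult y (star z x)) = 0" by (simp only: hN1[rule_format, of y z x] diff_self)
    have e4: "(star (mult z x) y) - (mult z (star x y)) = 0" by (simp only: hN1[rule_format, of z x y] diff_self)
    have e5: "(star (mult z y) x) - (mult z (star y x)) = 0" by (simp only: hN1[rule_format, of z y x] diff_self)
    have "rep 3 ((scale 2 (mult (circ x y) z) - scale 2 (mult (circ y x) z)) - (mult y (circ x z) - mult x (circ y z))) = rep 1 ((star (mult x y) z) - (mult x (star y z))) + rep 2 ((star (mult x z) y) - (mult x (star z y))) - rep 1 ((star (mult y x) z) - (mult y (star x z))) - rep 2 ((star (mult y z) x) - (mult y (star z x))) - rep 2 ((star (mult z x) y) - (mult z (star x y))) + rep 2 ((star (mult z y) x) - (mult z (star y x)))" by (simp add: EXP numeral_eq_Suc)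
    also have "... = 0" by (simp only: e0 e1 e2 e3 e4 e5 rep_zero_arg add_0_left add_0_right diff_zero diff_0 minus_zero)
    finally have r: "rep 3 ((scale 2 (mult (circ x y) z) - scale 2 (mult (circ y x) z)) - (mult y (circ x z) - mult x (circ y z))) = 0" .
    have "(scale 2 (mult (circ x y) z) - scale 2 (mult (circ y x) z)) - (mult y (circ x z) - mult x (circ y z)) = 0" using rep_cancel[OF r] by simp
    then show "scale 2 (mult (circ x y) z) - scale 2 (mult (circ y x) z) = mult y (circ x z) - mult x (circ y z)" by simp
  qed
  have A2: "\<forall>x y z. scale 2 (circ x (mult y z)) = circ (mult z x) y + mult z (circ x y)"
  proof (intro allI)
    fix x y z
    have e0: "(star (mult z x) y) - (mult z (star x y)) = 0" by (simp only: hN1[rule_format, of z x y] diff_self)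
    have e1: "(star (mult z y) x) - (mult z (star y x)) = 0" by (simp only: hN1[rule_format, of z y x] diff_self)
    have e2: "(mult (star x y) z - mult (star y x) z) - (star x (mult y z) - star y (mult x z)) = 0" by (simp only: hN2[rule_format, of x y z] diff_self)
    have "rep 3 ((scale 2 (circ x (mult y z))) - (circ (mult z x) y + mult z (circ x y))) = rep 1 ((star (mult z x) y) - (mult z (star x y))) - rep 4 ((star (mult z y) x) - (mult z (star y x))) + rep 2 ((mult (star x y) z - mult (star y x) z) - (star x (mult y z) - star y (mult x z)))" by (simp add: EXP numeral_eq_Suc)
    also have "... = 0" by (simp only: e0 e1 e2 rep_zero_arg add_0_left add_0_right diff_zero diff_0 minus_zero)
    finally have r: "rep 3 ((scale 2 (circ x (mult y z))) - (circ (mult z x) y + mult z (circ x y))) = 0" .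
    have "(scale 2 (circ x (mult y z))) - (circ (mult z x) y + mult z (circ x y)) = 0" using rep_cancel[OF r] by simp
    then show "scale 2 (circ x (mult y z)) = circ (mult z x) y + mult z (circ x y)" by simp
  qed
    show ?thesis unfolding APLP_identities_def using A1 A2 by blast
  qed
  have P3: "admissible_Novikov scale circ \<Longrightarrow> Novikov star \<and> anti_pre_Lie circ"
  proof -
    assume h: "admissible_Novikov scale circ"
    have hB1: "\<forall>x y z. circ x (circ y z) - circ y (circ x z) = circ (commut circ y x) z" using h unfolding admissible_Novikov_def by blast
    have hB2: "\<forall>x y z. scale 2 (circ x (commut circ y z)) = circ (circ x y) z - circ (circ x z) y" using h unfolding admissible_Novikov_def by blast
  have V1: "\<forall>x y z. star (star x y) z - star x (star y z) = star (star y x) z - star y (star x z)"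
  proof (intro allI)
    fix x y z
    have e0: "(circ x (circ y z) - circ y (circ x z)) - (circ (commut circ y x) z) = 0" by (simp only: hB1[rule_format, of x y z] diff_self)
    have e1: "(circ x (circ z y) - circ z (circ x y)) - (circ (commut circ z x) y) = 0" by (simp only: hB1[rule_format, of x z y] diff_self)
    have e2: "(circ y (circ z x) - circ z (circ y x)) - (circ (commut circ z y) x) = 0" by (simp only: hB1[rule_format, of y z x] diff_self)
    have e3: "(scale 2 (circ x (commut circ y z))) - (circ (circ x y) z - circ (circ x z) y) = 0" by (simp only: hB2[rule_format, of x y z] diff_self)
    have e4: "(scale 2 (circ y (commut circ x z))) - (circ (circ y x) z - circ (circ y z) x) = 0" by (simp only: hB2[rule_format, of y x z] diff_self)
    have e5: "(scale 2 (circ z (commut circ x y))) - (circ (circ z x) y - circ (circ z y) x) = 0" by (simp only: hB2[rule_format, of z x y] diff_self)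
    have "rep 3 ((star (star x y) z - star x (star y z)) - (star (star y x) z - star y (star x z))) = rep 5 ((circ x (circ y z) - circ y (circ x z)) - (circ (commut circ y x) z)) - rep 2 ((circ x (circ z y) - circ z (circ x y)) - (circ (commut circ z x) y)) + rep 2 ((circ y (circ z x) - circ z (circ y x)) - (circ (commut circ z y) x)) - rep 4 ((scale 2 (circ x (commut circ y z))) - (circ (circ x y) z - circ (circ x z) y)) + rep 4 ((scale 2 (circ y (commut circ x z))) - (circ (circ y x) z - circ (circ y z) x)) - rep 10 ((scale 2 (circ z (commut circ x y))) - (circ (circ z x) y - circ (circ z y) x))" by (simp add: EXP numeral_eq_Suc)
    also have "... = 0" by (simp only: e0 e1 e2 e3 e4 e5 rep_zero_arg add_0_left add_0_right diff_zero diff_0 minus_zero)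
    finally have r: "rep 3 ((star (star x y) z - star x (star y z)) - (star (star y x) z - star y (star x z))) = 0" .
    have "(star (star x y) z - star x (star y z)) - (star (star y x) z - star y (star x z)) = 0" using rep_cancel[OF r] by simp
    then show "star (star x y) z - star x (star y z) = star (star y x) z - star y (star x z)" by simp
  qed
  have V2: "\<forall>x y z. star (star x y) z = star (star x z) y"
  proof (intro allI)
    fix x y z
    have e0: "(circ x (circ y z) - circ y (circ x z)) - (circ (commut circ y x) z) = 0" by (simp only: hB1[rule_format, of x y z] diff_self)
    have e1: "(circ x (circ z y) - circ z (circ x y)) - (circ (commut circ z x) y) = 0" by (simp only: hB1[rule_format, of x z y] diff_self)
    have e2: "(circ y (circ z x) - circ z (circ y x)) - (circ (commut circ z y) x) = 0" by (simp only: hB1[rule_format, of y z x] diff_self)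
    have e3: "(scale 2 (circ x (commut circ y z))) - (circ (circ x y) z - circ (circ x z) y) = 0" by (simp only: hB2[rule_format, of x y z] diff_self)
    have e4: "(scale 2 (circ y (commut circ x z))) - (circ (circ y x) z - circ (circ y z) x) = 0" by (simp only: hB2[rule_format, of y x z] diff_self)
    have e5: "(scale 2 (circ z (commut circ x y))) - (circ (circ z x) y - circ (circ z y) x) = 0" by (simp only: hB2[rule_format, of z x y] diff_self)
    have "rep 3 ((star (star x y) z) - (star (star x z) y)) = rep 2 ((circ x (circ y z) - circ y (circ x z)) - (circ (commut circ y x) z)) - rep 2 ((circ x (circ z y) - circ z (circ x y)) - (circ (commut circ z x) y)) - rep 4 ((circ y (circ z x) - circ z (circ y x)) - (circ (commut circ z y) x)) - rep 1 ((scale 2 (circ x (commut circ y z))) - (circ (circ x y) z - circ (circ x z) y)) + rep 4 ((scale 2 (circ y (commut circ x z))) - (circ (circ y x) z - circ (circ y z) x)) - rep 4 ((scale 2 (circ z (commut circ x y))) - (circ (circ z x) y - circ (circ z y) x))" by (simp add: EXP numeral_eq_Suc)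
    also have "... = 0" by (simp only: e0 e1 e2 e3 e4 e5 rep_zero_arg add_0_left add_0_right diff_zero diff_0 minus_zero)
    finally have r: "rep 3 ((star (star x y) z) - (star (star x z) y)) = 0" .
    have "(star (star x y) z) - (star (star x z) y) = 0" using rep_cancel[OF r] by simp
    then show "star (star x y) z = star (star x z) y" by simp
  qed
  have P2: "\<forall>x y z. circ (commut circ x y) z + circ (commut circ y z) x + circ (commut circ z x) y = 0"
  proof (intro allI)
    fix x y z
    have e0: "(circ x (circ y z) - circ y (circ x z)) - (circ (commut circ y x) z) = 0" by (simp only: hB1[rule_format, of x y z] diff_self)
    have e1: "(circ x (circ z y) - circ z (circ x y)) - (circ (commut circ z x) y) = 0" by (simp only: hB1[rule_format, of x z y] diff_self)
    have e2: "(circ y (circ z x) - circ z (circ y x)) - (circ (commut circ z y) x) = 0" by (simp only: hB1[rule_format, of y z x] diff_self)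
    have e3: "(scale 2 (circ x (commut circ y z))) - (circ (circ x y) z - circ (circ x z) y) = 0" by (simp only: hB2[rule_format, of x y z] diff_self)
    have e4: "(scale 2 (circ y (commut circ x z))) - (circ (circ y x) z - circ (circ y z) x) = 0" by (simp only: hB2[rule_format, of y x z] diff_self)
    have e5: "(scale 2 (circ z (commut circ x y))) - (circ (circ z x) y - circ (circ z y) x) = 0" by (simp only: hB2[rule_format, of z x y] diff_self)
    have "rep 3 ((circ (commut circ x y) z + circ (commut circ y z) x + circ (commut circ z x) y) - (0)) = rep 2 ((circ x (circ y z) - circ y (circ x z)) - (circ (commut circ y x) z)) - rep 2 ((circ x (circ z y) - circ z (circ x y)) - (circ (commut circ z x) y)) + rep 2 ((circ y (circ z x) - circ z (circ y x)) - (circ (commut circ z y) x)) - rep 1 ((scale 2 (circ x (commut circ y z))) - (circ (circ x y) z - circ (circ x z) y)) + rep 1 ((scale 2 (circ y (commut circ x z))) - (circ (circ y x) z - circ (circ y z) x)) - rep 1 ((scale 2 (circ z (commut circ x y))) - (circ (circ z x) y - circ (circ z y) x))" by (simp add: EXP numeral_eq_Suc)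
    also have "... = 0" by (simp only: e0 e1 e2 e3 e4 e5 rep_zero_arg add_0_left add_0_right diff_zero diff_0 minus_zero)
    finally have r: "rep 3 ((circ (commut circ x y) z + circ (commut circ y z) x + circ (commut circ z x) y) - (0)) = 0" .
    have "(circ (commut circ x y) z + circ (commut circ y z) x + circ (commut circ z x) y) - (0) = 0" using rep_cancel[OF r] by simp
    then show "circ (commut circ x y) z + circ (commut circ y z) x + circ (commut circ z x) y = 0" by simp
  qed
    show ?thesis unfolding Novikov_def anti_pre_Lie_def using V1 V2 P2 hB1 by simp
  qed
  have P4: "Novikov star \<Longrightarrow> admissible_Novikov scale circ"
  proof -
    assume h: "Novikov star"
    have hV1: "\<forall>x y z. star (star x y) z - star x (star y z) = star (star y x) z - star y (star x z)" using h unfolding Novikov_def by blast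
    have hV2: "\<forall>x y z. star (star x y) z = star (star x z) y" using h unfolding Novikov_def by blast
  have B1: "\<forall>x y z. circ x (circ y z) - circ y (circ x z) = circ (commut circ y x) z"
  proof (intro allI)
    fix x y z
    have e0: "(star (star x y) z - star x (star y z)) - (star (star y x) z - star y (star x z)) = 0" by (simp only: hV1[rule_format, of x y z] diff_self)
    have e1: "(star (star x z) y - star x (star z y)) - (star (star z x) y - star z (star x y)) = 0" by (simp only: hV1[rule_format, of x z y] diff_self)
    have e2: "(star (star y z) x - star y (star z x)) - (star (star z y) x - star z (star y x)) = 0" by (simp only: hV1[rule_format, of y z x] diff_self)
    have e3: "(star (star z x) y) - (star (star z y) x) = 0" by (simp only: hV2[rule_format, of z x y] diff_self)
    have "rep 9 ((circ x (circ y z) - circ y (circ x z)) - (circ (commut circ y x) z)) = 0 - rep 1 ((star (star x y) z - star x (star y z)) - (star (star y x) z - star y (star x z))) - rep 2 ((star (star x z) y - star x (star z y)) - (star (star z x) y - star z (star x y))) + rep 2 ((star (star y z) x - star y (star z x)) - (star (star z y) x - star z (star y x))) - rep 6 ((star (star z x) y) - (star (star z y) x))" by (simp add: EXP numeral_eq_Suc)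
    also have "... = 0" by (simp only: e0 e1 e2 e3 rep_zero_arg add_0_left add_0_right diff_zero diff_0 minus_zero)
    finally have r: "rep 9 ((circ x (circ y z) - circ y (circ x z)) - (circ (commut circ y x) z)) = 0" .
    have "(circ x (circ y z) - circ y (circ x z)) - (circ (commut circ y x) z) = 0" using rep_cancel[OF r] by simp
    then show "circ x (circ y z) - circ y (circ x z) = circ (commut circ y x) z" by simp
  qed
  have B2: "\<forall>x y z. scale 2 (circ x (commut circ y z)) = circ (circ x y) z - circ (circ x z) y"
  proof (intro allI)
    fix x y z
    have e0: "(star (star x y) z - star x (star y z)) - (star (star y x) z - star y (star x z)) = 0" by (simp only: hV1[rule_format, of x y z] diff_self)
    have e1: "(star (star x z) y - star x (star z y)) - (star (star z x) y - star z (star x y)) = 0" by (simp only: hV1[rule_format, of x z y] diff_self)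
    have e2: "(star (star y z) x - star y (star z x)) - (star (star z y) x - star z (star y x)) = 0" by (simp only: hV1[rule_format, of y z x] diff_self)
    have e3: "(star (star x y) z) - (star (star x z) y) = 0" by (simp only: hV2[rule_format, of x y z] diff_self)
    have "rep 9 ((scale 2 (circ x (commut circ y z))) - (circ (circ x y) z - circ (circ x z) y)) = rep 2 ((star (star x y) z - star x (star y z)) - (star (star y x) z - star y (star x z))) - rep 2 ((star (star x z) y - star x (star z y)) - (star (star z x) y - star z (star x y))) - rep 4 ((star (star y z) x - star y (star z x)) - (star (star z y) x - star z (star y x))) - rep 3 ((star (star x y) z) - (star (star x z) y))" by (simp add: EXP numeral_eq_Suc)
    also have "... = 0" by (simp only: e0 e1 e2 e3 rep_zero_arg add_0_left add_0_right diff_zero diff_0 minus_zero)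
    finally have r: "rep 9 ((scale 2 (circ x (commut circ y z))) - (circ (circ x y) z - circ (circ x z) y)) = 0" .
    have "(scale 2 (circ x (commut circ y z))) - (circ (circ x y) z - circ (circ x z) y) = 0" using rep_cancel[OF r] by simp
    then show "scale 2 (circ x (commut circ y z)) = circ (circ x y) z - circ (circ x z) y" by simp
  qed
    show ?thesis unfolding admissible_Novikov_def using B1 B2 by blast
  qed
  show ?thesis using P1 P2 P3 P4 assms(4) unfolding admissible_Novikov_Poisson_def anti_pre_Lie_Poisson_def Novikov_Poisson_def by blast
qed
end
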